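(* Let $\pi$ be a model with data space $Y$ and parameter space $\Theta$ and let $\phi=\pi_{\text{post}}$ be the correct posterior (as a posterior family). Then for every test quantity $f$, $\phi$ passes continuous SBC with respect to $f$, and for every $M\in\mathbb{N}$ it satisfies $\int_Y Q_{\phi,f}(i\mid y)\pi_{\text{marg}}(y)\,\mathrm{d}y=\frac{i+1}{M+1}$ for all $i\in\{0,\dots,M-1\}$, i.e. it passes $M$-sample SBC with respect to $f$.
   Context: Model $\pi$: prior density $\pi_{\text{prior}}(\theta)$ on $\Theta$, observation density $\pi_{\text{obs}}(y\mid\theta)$ on $Y$, $\pi_{\text{marg}}(y)=\int_\Theta\pi_{\text{obs}}(y\mid\theta)\pi_{\text{prior}}(\theta)\,\mathrm{d}\theta$, $\pi_{\text{post}}(\theta\mid y)=\pi_{\text{obs}}(y\mid\theta)\pi_{\text{prior}}(\theta)/\pi_{\text{marg}}(y)$. A posterior family is $\phi:\Theta\times Y\to\mathbb{R}^+$ with $\int_\Theta\phi(\theta\mid y)\,\mathrm{d}\theta=1$ for all $y$; a test quantity is a measurable $f:\Theta\times Y\to\mathbb{R}$. Sample quantities: for $M\in\mathbb{N}$, $\theta_1,\dots,\theta_M$ i.i.d. from $\phi(\cdot\mid y)$, $N^{\mathtt{less}}=\sum_m\mathbb{I}[f(\theta_m,y)<f(\tilde\theta,y)]$, $N^{\mathtt{equals}}=\sum_m\mathbb{I}[f(\theta_m,y)=f(\tilde\theta,y)]$, $K$ uniform on $\{0,\dots,N^{\mathtt{equals}}\}$, $N^{\mathtt{total}}=N^{\mathtt{less}}+K$;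 $R_{\phi,f}(i\mid\tilde\theta,y)=\Pr(N^{\mathtt{total}}\le i)$; $Q_{\phi,f}(i\mid y)=\int_\Theta\pi_{\text{post}}(\tilde\theta\mid y)R_{\phi,f}(i\mid\tilde\theta,y)\,\mathrm{d}\tilde\theta$. Continuous quantities: $C_{\phi,f}(s\mid y)=\int_\Theta\mathbb{I}[f(\theta,y)\le s]\phi(\theta\mid y)\,\mathrm{d}\theta$, $D_{\phi,f}(s\mid y)=\int_\Theta\mathbb{I}[f(\theta,y)=s]\phi(\theta\mid y)\,\mathrm{d}\theta$; with $U\sim\mathrm{uniform}[0,1]$, $r_{\phi,f}(x\mid\tilde\theta,y)=\Pr\big(C_{\phi,f}(f(\tilde\theta,y)\mid y)-U\,D_{\phi,f}(f(\tilde\theta,y)\mid y)\le x\big)$, $q_{\phi,f}(x\mid y)=\int_\Theta\pi_{\text{post}}(\tilde\theta\mid y)r_{\phi,f}(x\mid\tilde\theta,y)\,\mathrm{d}\tilde\theta$. $\phi$ passes continuous SBC w.r.t. $f$ if $\int_Yq_{\phi,f}(x\mid y)\pi_{\text{marg}}(y)\,\mathrm{d}y=x$ for all $x\in[0,1]$. *)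

theory Defs
  imports "HOL-Probability.Probability"
begin

text \<open>Model: parameter space = space MT (base measure MT, "d theta"), data space = space MY
  (base measure MY, "d y"); prior density prior, observation density obs y theta.\<close>

definition marg :: "'p measure \<Rightarrow> ('p \<Rightarrow> real) \<Rightarrow> ('y \<Rightarrow> 'p \<Rightarrow> real) \<Rightarrow> 'y \<Rightarrow> real" where
  "marg MT prior obs y = (\<integral>\<theta>. obs y \<theta> * prior \<theta> \<partial>MT)"

definition post :: "'p measure \<Rightarrow> ('p \<Rightarrow> real) \<Rightarrow> ('y \<Rightarrow> 'p \<Rightarrow> real) \<Rightarrow> 'p \<Rightarrow> 'y \<Rightarrow> real" where
  "post MT prior obs \<theta> y = obs y \<theta> * prior \<theta> / marg MT prior obs y"

definition sample_measure :: "'p measure \<Rightarrow> ('p \<Rightarrow> 'y \<Rightarrow> real) \<Rightarrow> nat \<Rightarrow> 'y \<Rightarrow> (nat \<Rightarrow> 'p) measure" where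
  "sample_measure MT \<phi> M y = PiM {..<M} (\<lambda>_. density MT (\<lambda>\<theta>. ennreal (\<phi> \<theta> y)))"

definition N_less :: "('p \<Rightarrow> 'y \<Rightarrow> real) \<Rightarrow> nat \<Rightarrow> 'p \<Rightarrow> 'y \<Rightarrow> (nat \<Rightarrow> 'p) \<Rightarrow> nat" where
  "N_less f M \<theta>t y \<omega> = card {m \<in> {..<M}. f (\<omega> m) y < f \<theta>t y}"

definition N_equals :: "('p \<Rightarrow> 'y \<Rightarrow> real) \<Rightarrow> nat \<Rightarrow> 'p \<Rightarrow> 'y \<Rightarrow> (nat \<Rightarrow> 'p) \<Rightarrow> nat" where
  "N_equals f M \<theta>t y \<omega> = card {m \<in> {..<M}. f (\<omega> m) y = f \<theta>t y}"

text \<open>R(i | theta~, y) = Pr(N_total <= i), N_total = N_less + K, K uniform on {0..N_equals}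
  given the samples; i.e. the expectation over the samples of the conditional probability.\<close>
definition sbc_R :: "'p measure \<Rightarrow> ('p \<Rightarrow> 'y \<Rightarrow> real) \<Rightarrow> ('p \<Rightarrow> 'y \<Rightarrow> real) \<Rightarrow> nat \<Rightarrow> nat \<Rightarrow> 'p \<Rightarrow> 'y \<Rightarrow> real" where
  "sbc_R MT \<phi> f M i \<theta>t y =
     (\<integral>\<omega>. measure_pmf.prob (pmf_of_set {0..N_equals f M \<theta>t y \<omega>})
              {k. N_less f M \<theta>t y \<omega> + k \<le> i} \<partial>(sample_measure MT \<phi> M y))"

definition sbc_Q :: "'p measure \<Rightarrow> ('p \<Rightarrow> real) \<Rightarrow> ('y \<Rightarrow> 'p \<Rightarrow> real) \<Rightarrow> ('p \<Rightarrow> 'y \<Rightarrow> real) \<Rightarrow> ('p \<Rightarrow> 'y \<Rightarrow> real) \<Rightarrow> nat \<Rightarrow> nat \<Rightarrow> 'y \<Rightarrow> real" where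
  "sbc_Q MT prior obs \<phi> f M i y = (\<integral>\<theta>t. post MT prior obs \<theta>t y * sbc_R MT \<phi> f M i \<theta>t y \<partial>MT)"

definition passes_M_SBC :: "'p measure \<Rightarrow> 'y measure \<Rightarrow> ('p \<Rightarrow> real) \<Rightarrow> ('y \<Rightarrow> 'p \<Rightarrow> real) \<Rightarrow> ('p \<Rightarrow> 'y \<Rightarrow> real) \<Rightarrow> ('p \<Rightarrow> 'y \<Rightarrow> real) \<Rightarrow> nat \<Rightarrow> bool" where
  "passes_M_SBC MT MY prior obs \<phi> f M \<longleftrightarrow>
     (\<forall>i<M. (\<integral>y. sbc_Q MT prior obs \<phi> f M i y * marg MT prior obs y \<partial>MY) = real (i + 1) / real (M + 1))"

definition cont_C :: "'p measure \<Rightarrow> ('p \<Rightarrow> 'y \<Rightarrow> real) \<Rightarrow> ('p \<Rightarrow> 'y \<Rightarrow> real) \<Rightarrow> real \<Rightarrow> 'y \<Rightarrow> real" where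
  "cont_C MT \<phi> f s y = (\<integral>\<theta>. indicator {\<theta>. f \<theta> y \<le> s} \<theta> * \<phi> \<theta> y \<partial>MT)"

definition cont_D :: "'p measure \<Rightarrow> ('p \<Rightarrow> 'y \<Rightarrow> real) \<Rightarrow> ('p \<Rightarrow> 'y \<Rightarrow> real) \<Rightarrow> real \<Rightarrow> 'y \<Rightarrow> real" where
  "cont_D MT \<phi> f s y = (\<integral>\<theta>. indicator {\<theta>. f \<theta> y = s} \<theta> * \<phi> \<theta> y \<partial>MT)"

definition cont_r :: "'p measure \<Rightarrow> ('p \<Rightarrow> 'y \<Rightarrow> real) \<Rightarrow> ('p \<Rightarrow> 'y \<Rightarrow> real) \<Rightarrow> real \<Rightarrow> 'p \<Rightarrow> 'y \<Rightarrow> real" where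
  "cont_r MT \<phi> f x \<theta>t y =
     measure (uniform_measure lborel {0..1::real})
       {u. cont_C MT \<phi> f (f \<theta>t y) y - u * cont_D MT \<phi> f (f \<theta>t y) y \<le> x}"

definition cont_q :: "'p measure \<Rightarrow> ('p \<Rightarrow> real) \<Rightarrow> ('y \<Rightarrow> 'p \<Rightarrow> real) \<Rightarrow> ('p \<Rightarrow> 'y \<Rightarrow> real) \<Rightarrow> ('p \<Rightarrow> 'y \<Rightarrow> real) \<Rightarrow> real \<Rightarrow> 'y \<Rightarrow> real" where
  "cont_q MT prior obs \<phi> f x y = (\<integral>\<theta>t. post MT prior obs \<theta>t y * cont_r MT \<phi> f x \<theta>t y \<partial>MT)"

definition passes_cont_SBC :: "'p measure \<Rightarrow> 'y measure \<Rightarrow> ('p \<Rightarrow> real) \<Rightarrow> ('y \<Rightarrow> 'p \<Rightarrow> real) \<Rightarrow> ('p \<Rightarrow> 'y \<Rightarrow> real) \<Rightarrow> ('p \<Rightarrow> 'y \<Rightarrow> real) \<Rightarrow> bool" where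
  "passes_cont_SBC MT MY prior obs \<phi> f \<longleftrightarrow>
     (\<forall>x\<in>{0..1}. (\<integral>y. cont_q MT prior obs \<phi> f x y * marg MT prior obs y \<partial>MY) = x)"

end

theory Submission
  imports Defs
begin


lemma rank_sum:
  fixes x :: "nat \<Rightarrow> real" and n i :: nat
  assumes "i < n"
  shows "(\<Sum>j<n. real (card {k\<in>{0..card {k\<in>{..<n}. x k = x j} - 1}. card {k\<in>{..<n}. x k < x j} + k \<le> i})
            / real (card {k\<in>{..<n}. x k = x j})) = real i + 1"
proof -
  define L where "L = (\<lambda>j. card {k\<in>{..<n}. x k < x j})"
  define c where "c = (\<lambda>j. card {k\<in>{..<n}. x k = x j})"
  have Lc: "L j + c j = card {k\<in>{..<n}. x k \<le> x j}" for j
  proof -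
    have "{k\<in>{..<n}. x k \<le> x j} = {k\<in>{..<n}. x k < x j} \<union> {k\<in>{..<n}. x k = x j}" by auto
    moreover have "{k\<in>{..<n}. x k < x j} \<inter> {k\<in>{..<n}. x k = x j} = {}" by auto
    ultimately show ?thesis unfolding L_def c_def by (simp add: card_Un_disjoint)
  qed
  have Lcn: "L j + c j \<le> n" for j
    unfolding Lc by (rule order.trans[OF card_mono[of "{..<n}"]]) auto
  have c1: "c j \<ge> 1" if "j < n" for j
  proof -
    have "j \<in> {k\<in>{..<n}. x k = x j}" using that by auto
    then have "card {k\<in>{..<n}. x k = x j} > 0" by (subst card_gt_0_iff) auto
    then show ?thesis unfolding c_def by simp
  qed
  have lt: "L j + c j \<le> L j0" if "x j < x j0" for j j0
  proof -
    have "card {k\<in>{..<n}. x k \<le> x j} \<le> card {k\<in>{..<n}. x k < x j0}"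
      using that by (intro card_mono) auto
    then show ?thesis using Lc[of j] unfolding L_def by linarith
  qed
  have eqx: "L j = L j0 \<and> c j = c j0" if "x j = x j0" for j j0
    unfolding L_def c_def using that by simp
  define ind where "ind = (\<lambda>j t. L j \<le> t \<and> t < L j + c j)"
  define inner where "inner = (\<lambda>t. \<Sum>j<n. if ind j t then 1 / real (c j) else 0)"
  have inner_le: "inner t \<le> 1" for t
  proof (cases "\<exists>j0<n. ind j0 t")
    case True
    then obtain j0 where j0: "j0 < n" "ind j0 t" by blast
    have iff: "ind j t \<longleftrightarrow> x j = x j0" for j
    proof
      assume "ind j t"
      show "x j = x j0"
      proof (rule ccontr)
        assume "x j \<noteq> x j0"
        then consider "x j < x j0" | "x j0 < x j" by linarith
        then show False
          using lt[of j j0] lt[of j0 j] \<open>ind j t\<close> j0(2) unfolding ind_def by cases auto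
      qed
    next
      assume "x j = x j0" then show "ind j t" using eqx[of j j0] j0(2) unfolding ind_def by simp
    qed
    have "inner t = (\<Sum>j<n. if x j = x j0 then 1 / real (c j0) else 0)"
      unfolding inner_def by (intro sum.cong) (auto simp: iff c_def)
    also have "\<dots> = real (card {j\<in>{..<n}. x j = x j0}) / real (c j0)"
      by (simp add: sum.If_cases Int_def)
    also have "\<dots> = real (c j0) / real (c j0)" unfolding c_def by simp
    also have "\<dots> = 1" using c1[OF j0(1)] by simp
    finally show ?thesis by simp
  next
    case False
    then have "inner t = 0" unfolding inner_def by (intro sum.neutral) auto
    then show ?thesis by simp
  qed
  have card_ind: "card {t\<in>{..<n}. ind j t} = c j" for j
  proof -
    have "{t\<in>{..<n}. ind j t} = {L j..<L j + c j}" using Lcn[of j] unfolding ind_def by auto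
    then show ?thesis by simp
  qed
  have "(\<Sum>t<n. inner t) = (\<Sum>j<n. \<Sum>t<n. if ind j t then 1 / real (c j) else 0)"
    unfolding inner_def by (rule sum.swap)
  also have "\<dots> = (\<Sum>j<n. real (card {t\<in>{..<n}. ind j t}) / real (c j))"
    by (simp add: sum.If_cases Int_def)
  also have "\<dots> = (\<Sum>j<n. 1)"
  proof (intro sum.cong refl)
    fix j assume "j \<in> {..<n}"
    then have "c j \<ge> 1" using c1 by auto
    then show "real (card {t\<in>{..<n}. ind j t}) / real (c j) = 1" unfolding card_ind by simp
  qed
  finally have suminner: "(\<Sum>t<n. inner t) = real n" by simp
  have inner1: "inner t = 1" if "t < n" for t
  proof -
    have "(\<Sum>t<n. 1 - inner t) = 0" using suminner by (simp add: sum_subtractf)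
    then have "\<forall>t\<in>{..<n}. 1 - inner t = 0"
      by (subst sum_nonneg_eq_0_iff[symmetric]) (auto simp: inner_le)
    then show ?thesis using that by auto
  qed
  have cardk: "card {k\<in>{0..c j - 1}. L j + k \<le> i} = card {t\<in>{..<n}. ind j t \<and> t \<le> i}" if "j < n" for j
  proof -
    have "{t\<in>{..<n}. ind j t \<and> t \<le> i} = (\<lambda>k. L j + k) ` {k\<in>{0..c j - 1}. L j + k \<le> i}"
    proof (rule set_eqI, rule iffI)
      fix t assume t: "t \<in> {t\<in>{..<n}. ind j t \<and> t \<le> i}"
      then have "t - L j \<in> {k\<in>{0..c j - 1}. L j + k \<le> i}" "t = L j + (t - L j)"
        unfolding ind_def by auto
      then show "t \<in> (\<lambda>k. L j + k) ` {k\<in>{0..c j - 1}. L j + k \<le> i}" by blast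
    next
      fix t assume "t \<in> (\<lambda>k. L j + k) ` {k\<in>{0..c j - 1}. L j + k \<le> i}"
      then show "t \<in> {t\<in>{..<n}. ind j t \<and> t \<le> i}"
        using c1[OF that] Lcn[of j] unfolding ind_def by auto
    qed
    then show ?thesis by (simp add: card_image)
  qed
  have "(\<Sum>j<n. real (card {k\<in>{0..c j - 1}. L j + k \<le> i}) / real (c j))
      = (\<Sum>j<n. \<Sum>t<n. if t \<le> i then (if ind j t then 1 / real (c j) else 0) else 0)"
  proof (intro sum.cong refl)
    fix j assume j: "j \<in> {..<n}"
    have "real (card {t\<in>{..<n}. ind j t \<and> t \<le> i}) = (\<Sum>t\<in>{t\<in>{..<n}. ind j t \<and> t \<le> i}. 1)"
      by simp
    also have "\<dots> = (\<Sum>t<n. if ind j t \<and> t \<le> i then 1 else 0)"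
      by (rule sum.inter_filter) simp
    finally have "real (card {k\<in>{0..c j - 1}. L j + k \<le> i}) / real (c j)
       = (\<Sum>t<n. if ind j t \<and> t \<le> i then 1 else 0) / real (c j)"
      using cardk j by simp
    also have "\<dots> = (\<Sum>t<n. if t \<le> i then (if ind j t then 1 / real (c j) else 0) else 0)"
      unfolding sum_divide_distrib by (intro sum.cong) auto
    finally show "real (card {k\<in>{0..c j - 1}. L j + k \<le> i}) / real (c j)
       = (\<Sum>t<n. if t \<le> i then (if ind j t then 1 / real (c j) else 0) else 0)" .
  qed
  also have "\<dots> = (\<Sum>t<n. if t \<le> i then inner t else 0)"
    unfolding inner_def
  proof (subst sum.swap, intro sum.cong refl)
    fix t assume "t \<in> {..<n}"
    show "(\<Sum>j<n. if t \<le> i then (if ind j t then 1 / real (c j) else 0) else 0) =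
      (if t \<le> i then (\<Sum>j<n. if ind j t then 1 / real (c j) else 0) else 0)"
      by (cases "t \<le> i") auto
  qed
  also have "\<dots> = (\<Sum>t<n. if t \<le> i then 1 else 0)"
    by (intro sum.cong) (auto simp: inner1)
  also have "\<dots> = real (card {t\<in>{..<n}. t \<le> i})" by (simp add: sum.If_cases Int_def)
  also have "{t\<in>{..<n}. t \<le> i} = {..i}" using assms by auto
  finally show ?thesis unfolding L_def c_def by simp
qed


definition hfun :: "real \<Rightarrow> real \<Rightarrow> real \<Rightarrow> real" where
  "hfun c d x = (if c \<le> x then 1 else if c - d < x then (x - (c - d)) / d else 0)"

lemma unif_hfun:
  fixes c d x :: real
  assumes "0 \<le> d"
  shows "measure (uniform_measure lborel {0..1::real}) {u. c - u * d \<le> x} = hfun c d x"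
proof -
  have B: "{u. c - u * d \<le> x} \<in> sets lborel" by measurable
  have "measure (uniform_measure lborel {0..1::real}) {u. c - u * d \<le> x}
      = measure lborel ({0..1} \<inter> {u. c - u * d \<le> x}) / measure lborel {0..1::real}"
    using B by (subst measure_uniform_measure) auto
  also have "\<dots> = measure lborel ({0..1} \<inter> {u. c - u * d \<le> x})" by simp
  also have "\<dots> = hfun c d x"
  proof (cases "c \<le> x")
    case True
    have "{0..1} \<inter> {u. c - u * d \<le> x} = {0..1}"
      using True assms by (auto intro: order.trans[of _ c] simp: mult_nonneg_nonneg)
    then show ?thesis using True by (simp add: hfun_def)
  next
    case False
    show ?thesis
    proof (cases "c - d < x")
      case True
      then have d: "d > 0" using False by linarith
      have "{0..1} \<inter> {u. c - u * d \<le> x} = {(c - x) / d..1}"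
        using d False by (auto simp: field_simps) (smt (verit) mult_nonpos_nonneg)
      moreover have "(c - x) / d \<le> 1" using d True by (simp add: field_simps)
      ultimately show ?thesis using False True d by (simp add: hfun_def field_simps)
    next
      case False2: False
      have "{0..1} \<inter> {u. c - u * d \<le> x} \<subseteq> {1..1}"
      proof
        fix u assume u: "u \<in> {0..1} \<inter> {u. c - u * d \<le> x}"
        have "u * d \<le> d" using u assms by (simp add: mult_left_le_one_le)
        then have "u * d = d" using u False2 by (simp only: Int_iff mem_Collect_eq) linarith
        moreover have "d > 0"
        proof -
          have "c - u * d \<le> x" using u by simp
          then have "u * d > 0" using False by linarith
          then show ?thesis using assms by (cases "d = 0") auto
        qed
        ultimately show "u \<in> {1..1}" by simp
      qed
      then have "measure lborel ({0..1} \<inter> {u. c - u * d \<le> x}) \<le> measure lborel {1..1::real}"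
        by (intro measure_mono_fmeasurable) (auto simp: fmeasurable_def emeasure_lborel_countable)
      then have "measure lborel ({0..1} \<inter> {u. c - u * d \<le> x}) = 0"
        using measure_nonneg[of lborel "{0..1} \<inter> {u. c - u * d \<le> x}"] by simp
      then show ?thesis using False False2 by (simp add: hfun_def)
    qed
  qed
  finally show ?thesis .
qed

lemma hfun_meas[measurable]:
  assumes [measurable]: "a \<in> borel_measurable N" "b \<in> borel_measurable N"
  shows "(\<lambda>z. hfun (a z) (b z) x) \<in> borel_measurable N"
  unfolding hfun_def by measurable

lemma (in real_distribution) cdf_split: "cdf M s = measure M {..<s} + measure M {s}"
proof -
  have "{..s} = {..<s} \<union> {s}" by auto
  moreover have "measure M ({..<s} \<union> {s}) = measure M {..<s} + measure M {s}"
    by (rule finite_measure_Union) auto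
  ultimately show ?thesis unfolding cdf_def by simp
qed

lemma (in real_distribution) meas_cdf[measurable]: "cdf M \<in> borel_measurable borel"
  by (rule borel_measurable_mono) (simp add: mono_def cdf_nondecreasing)

lemma (in real_distribution) meas_Lm[measurable]: "(\<lambda>s. measure M {..<s}) \<in> borel_measurable borel"
  by (rule borel_measurable_mono) (auto simp: mono_def intro!: finite_measure_mono)

lemma (in real_distribution) meas_atom[measurable]: "(\<lambda>s. measure M {s}) \<in> borel_measurable borel"
proof -
  have "(\<lambda>s. measure M {s}) = (\<lambda>s. cdf M s - measure M {..<s})"
    using cdf_split by (auto simp: fun_eq_iff)
  then show ?thesis by simp
qed

lemma (in real_distribution) pit:
  fixes x :: real
  assumes x0: "0 \<le> x" and x1: "x \<le> 1"
  shows "(\<integral>s. hfun (cdf M s) (measure M {s}) x \<partial>M) = x"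
proof (cases "x = 1")
  case True
  have "(\<integral>s. hfun (cdf M s) (measure M {s}) x \<partial>M) = (\<integral>s. 1 \<partial>M)"
    using True cdf_bounded_prob by (intro Bochner_Integration.integral_cong) (auto simp: hfun_def)
  then show ?thesis using True prob_space space_eq_univ by simp
next
  case False
  then have x1': "x < 1" using x1 by simp
  define A where "A = {s. cdf M s > x}"
  have "eventually (\<lambda>s. cdf M s > x) at_top"
    using order_tendstoD(1)[OF cdf_lim_at_top_prob x1'] .
  then obtain s0 where "cdf M s0 > x" by (auto simp: eventually_at_top_linorder)
  then have Ane: "A \<noteq> {}" unfolding A_def by auto
  have Aup: "cdf M s > x" if "a \<in> A" "a \<le> s" for a s
    using that cdf_nondecreasing[of a s] unfolding A_def by auto
  show ?thesis
  proof (cases "bdd_below A")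
    case False
    have all: "cdf M s > x" for s
    proof -
      from False obtain a where "a \<in> A" "a < s"
        unfolding bdd_below_def by (meson not_le)
      then show ?thesis using Aup by auto
    qed
    have "x \<le> 0"
      by (rule tendsto_lowerbound[OF cdf_lim_at_bot]) (auto intro!: always_eventually less_imp_le all)
    then have x0': "x = 0" using x0 by simp
    have "(\<integral>s. hfun (cdf M s) (measure M {s}) x \<partial>M) = (\<integral>s. 0 \<partial>M)"
    proof (intro Bochner_Integration.integral_cong refl)
      fix s
      have "measure M {..<s} \<ge> 0" by simp
      then show "hfun (cdf M s) (measure M {s}) x = 0"
        using all[of s] x0' cdf_split[of s] by (simp add: hfun_def)
    qed
    then show ?thesis using x0' by simp
  next
    case True
    define a where "a = Inf A"
    have gt: "cdf M s > x" if "s > a" for s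
    proof -
      from that obtain a' where "a' \<in> A" "a' < s"
        using cInf_less_iff[OF Ane True] unfolding a_def by auto
      then show ?thesis using Aup by auto
    qed
    have lt: "cdf M s \<le> x" if "s < a" for s
    proof (rule ccontr)
      assume "\<not> cdf M s \<le> x"
      then have "s \<in> A" unfolding A_def by auto
      then have "a \<le> s" unfolding a_def using True by (rule cInf_lower)
      then show False using that by simp
    qed
    have Fa: "x \<le> cdf M a"
    proof (rule tendsto_lowerbound)
      show "(cdf M \<longlongrightarrow> cdf M a) (at_right a)"
        using cdf_is_right_cont[of a] by (simp add: continuous_within)
      show "eventually (\<lambda>s. x \<le> cdf M s) (at_right a)"
        by (rule eventually_at_rightI[of a "a + 1"]) (auto intro: less_imp_le gt)
    qed simp
    have La: "measure M {..<a} \<le> x"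
    proof (rule tendsto_upperbound)
      show "(cdf M \<longlongrightarrow> measure M {..<a}) (at_left a)" by (rule cdf_at_left)
      show "eventually (\<lambda>s. cdf M s \<le> x) (at_left a)"
        by (rule eventually_at_leftI[of "a - 1"]) (auto intro: lt)
    qed simp
    define ha where "ha = hfun (cdf M a) (measure M {a}) x"
    have pw: "hfun (cdf M s) (measure M {s}) x = indicator {..<a} s + ha * indicator {a} s" for s
    proof -
      consider "s < a" | "s = a" | "s > a" by linarith
      then show ?thesis
      proof cases
        case 1 then show ?thesis using lt[of s] by (simp add: hfun_def)
      next
        case 2 then show ?thesis by (simp add: ha_def)
      next
        case 3
        have "measure M {..a} \<le> measure M {..<s}"
          using 3 by (intro finite_measure_mono) auto
        then have "cdf M s - measure M {s} \<ge> x" using cdf_split[of s] Fa unfolding cdf_def by simp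
        then show ?thesis using 3 gt[of s] by (simp add: hfun_def)
      qed
    qed
    have "(\<integral>s. hfun (cdf M s) (measure M {s}) x \<partial>M) = (\<integral>s. indicator {..<a} s + ha * indicator {a} s \<partial>M)"
      using pw by simp
    also have "\<dots> = measure M {..<a} + ha * measure M {a}"
      using integrable_real_indicator[of "{..<a}" M] integrable_real_indicator[of "{a}" M]
      by (subst Bochner_Integration.integral_add)
        (auto simp: integral_mult_right_zero integral_indicator emeasure_eq_measure)
    also have "\<dots> = x"
    proof (cases "cdf M a \<le> x")
      case True
      then show ?thesis using Fa cdf_split[of a] by (simp add: ha_def hfun_def)
    next
      case False
      show ?thesis
      proof (cases "measure M {..<a} < x")
        case True
        then have "measure M {a} > 0" using False cdf_split[of a] by simp
        then show ?thesis using True False cdf_split[of a] by (simp add: ha_def hfun_def field_simps)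
      next
        case False2: False
        then show ?thesis using La False cdf_split[of a] by (simp add: ha_def hfun_def)
      qed
    qed
    finally show ?thesis .
  qed
qed



lemma card_meas:
  assumes "finite K" "\<And>m. m \<in> K \<Longrightarrow> {z \<in> space N. Q m z} \<in> sets N"
  shows "(\<lambda>z. card {m\<in>K. Q m z}) \<in> measurable N (count_space UNIV)"
proof -
  have eq: "(\<lambda>z. card {m\<in>K. Q m z}) = (\<lambda>z. \<Sum>m\<in>K. (if Q m z then 1 else 0::nat))"
    using assms(1) by (simp add: fun_eq_iff sum.If_cases Int_def)
  have "(\<lambda>z. \<Sum>m\<in>K. (if Q m z then 1 else 0::nat)) \<in> borel_measurable N"
    using assms by (intro borel_measurable_sum) (auto intro!: measurable_If_set)
  then show ?thesis unfolding eq
    using measurable_cong_sets[OF refl sets_borel_eq_count_space] by blast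
qed

definition rp :: "nat \<Rightarrow> nat \<Rightarrow> nat \<Rightarrow> real" where
  "rp i l e = measure_pmf.prob (pmf_of_set {0..e}) {k. l + k \<le> i}"

lemma rp_bounds: "0 \<le> rp i l e" "rp i l e \<le> 1"
  unfolding rp_def by auto

lemma rp_card: "rp i l e = real (card {k\<in>{0..e}. l + k \<le> i}) / real (Suc e)"
  unfolding rp_def by (subst measure_pmf_of_set) (auto simp: Int_def)

lemma rp_meas:
  assumes "A \<in> measurable N (count_space UNIV)" "B \<in> measurable N (count_space UNIV)"
  shows "(\<lambda>z. rp i (A z) (B z)) \<in> borel_measurable N"
proof -
  have "(\<lambda>z. rp i l (B z)) \<in> borel_measurable N" for l
    by (rule measurable_compose_countable'[where g=B and I=UNIV, OF _ assms(2)]) simp_all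
  then show ?thesis
    by (rule measurable_compose_countable'[where g=A and I=UNIV, OF _ assms(1)]) simp_all
qed

lemma card_perm:
  assumes inv: "\<And>k. \<sigma> (\<sigma> k) = (k::nat)" and AB: "\<sigma> ` A = B" and fin: "finite A"
  shows "card {k\<in>A. Q (\<sigma> k)} = card {k\<in>B. Q k}"
proof -
  have inj: "inj \<sigma>" by (metis inv injI)
  have "{k\<in>B. Q k} = \<sigma> ` {k\<in>A. Q (\<sigma> k)}"
    using AB inv by (auto simp: image_iff)
  then show ?thesis by (simp add: card_image inj_on_subset[OF inj])
qed

lemma sbc_exch:
  fixes g :: "'p \<Rightarrow> real"
  assumes P: "prob_space P" and g[measurable]: "g \<in> borel_measurable P" and iM: "i < M"
  shows "(\<integral>t. (\<integral>\<omega>. rp i (card {m\<in>{..<M}. g (\<omega> m) < g t}) (card {m\<in>{..<M}. g (\<omega> m) = g t})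
           \<partial>PiM {..<M} (\<lambda>_. P)) \<partial>P) = real (Suc i) / real (Suc M)"
proof -
  interpret P: prob_space P by fact
  define I where "I = {..<Suc M}"
  define Pi where "Pi = PiM I (\<lambda>_. P)"
  define PM where "PM = PiM {..<M} (\<lambda>_. P)"
  interpret PS: product_prob_space "\<lambda>_::nat. P" by (rule product_prob_spaceI) (rule P)
  interpret Pi: prob_space Pi unfolding Pi_def by (rule prob_space_PiM) (rule P)
  interpret PM: prob_space PM unfolding PM_def by (rule prob_space_PiM) (rule P)
  interpret PP: pair_prob_space P PM ..
  define rk where "rk j \<omega> = rp i (card {k\<in>I-{j}. g (\<omega> k) < g (\<omega> j)}) (card {k\<in>I-{j}. g (\<omega> k) = g (\<omega> j)})"
    for j \<omega>
  define \<Phi> where "\<Phi> t \<omega> = rp i (card {m\<in>{..<M}. g (\<omega> m) < g t}) (card {m\<in>{..<M}. g (\<omega> m) = g t})"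
    for t \<omega>
  have rk_meas[measurable]: "rk j \<in> borel_measurable Pi" if "j \<in> I" for j
    unfolding rk_def
  proof (intro rp_meas card_meas)
    fix k assume k: "k \<in> I - {j}"
    have [measurable]: "(\<lambda>w. g (w k)) \<in> borel_measurable Pi" "(\<lambda>w. g (w j)) \<in> borel_measurable Pi"
      unfolding Pi_def using k that
      by (auto intro!: measurable_compose[OF measurable_component_singleton[of _ I "\<lambda>_. P"] g])
    show "{z \<in> space Pi. g (z k) < g (z j)} \<in> sets Pi" "{z \<in> space Pi. g (z k) = g (z j)} \<in> sets Pi"
      by measurable
  qed (auto simp: I_def)
  have rk_int: "integrable Pi (rk j)" if "j \<in> I" for j
    by (rule Pi.integrable_const_bound[where B=1]) (auto simp: rk_def rp_bounds that)
  have \<Phi>_meas: "case_prod \<Phi> \<in> borel_measurable (P \<Otimes>\<^sub>M PM)"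
    unfolding \<Phi>_def split_beta'
  proof (intro rp_meas card_meas)
    fix k assume k: "k \<in> {..<M}"
    have gk: "(\<lambda>w. g (w k)) \<in> borel_measurable PM" unfolding PM_def using k
      by (auto intro!: measurable_compose[OF measurable_component_singleton[of _ "{..<M}" "\<lambda>_. P"] g])
    have [measurable]: "(\<lambda>z. g (snd z k)) \<in> borel_measurable (P \<Otimes>\<^sub>M PM)"
      by (rule measurable_compose[OF measurable_snd gk])
    show "{z \<in> space (P \<Otimes>\<^sub>M PM). g (snd z k) < g (fst z)} \<in> sets (P \<Otimes>\<^sub>M PM)"
        "{z \<in> space (P \<Otimes>\<^sub>M PM). g (snd z k) = g (fst z)} \<in> sets (P \<Otimes>\<^sub>M PM)"
      by measurable
  qed auto
  have \<Phi>_int: "integrable (P \<Otimes>\<^sub>M PM) (case_prod \<Phi>)"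
  proof (rule PP.P.integrable_const_bound[where B=1])
    show "AE z in P \<Otimes>\<^sub>M PM. norm (case_prod \<Phi> z) \<le> 1"
    proof (rule AE_I2)
      fix z show "norm (case_prod \<Phi> z) \<le> 1"
        using rp_bounds[of i] unfolding \<Phi>_def split_beta' real_norm_def by (simp add: abs_le_iff)
    qed
  qed (rule \<Phi>_meas)
  have "(\<integral>t. (\<integral>\<omega>. \<Phi> t \<omega> \<partial>PM) \<partial>P) = (\<integral>\<omega>. (\<integral>t. \<Phi> t \<omega> \<partial>P) \<partial>PM)"
    using PP.Fubini_integral[OF \<Phi>_int] by simp
  also have "\<dots> = (\<integral>\<omega>. rk M \<omega> \<partial>Pi)"
  proof -
    have II: "I = insert M {..<M}" unfolding I_def by auto
    have "(\<integral>\<omega>. rk M \<omega> \<partial>Pi) = (\<integral>x. (\<integral>y. rk M (x(M:=y)) \<partial>P) \<partial>PM)"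
      unfolding Pi_def PM_def II
      by (rule PS.product_integral_insert) (use rk_int[of M] in \<open>auto simp: Pi_def II\<close>)
    also have "\<dots> = (\<integral>\<omega>. (\<integral>t. \<Phi> t \<omega> \<partial>P) \<partial>PM)"
    proof -
      have "I - {M} = {..<M}" unfolding I_def by auto
      then have "rk M (x(M:=y)) = \<Phi> y x" for x y
        unfolding rk_def \<Phi>_def by (auto intro!: arg_cong2[where f="rp i"] arg_cong[where f=card])
      then show ?thesis by simp
    qed
    finally show ?thesis by simp
  qed
  finally have step1: "(\<integral>t. (\<integral>\<omega>. \<Phi> t \<omega> \<partial>PM) \<partial>P) = (\<integral>\<omega>. rk M \<omega> \<partial>Pi)" .
  \<comment> \<open>step 2: exchangeability\<close>
  have exch: "(\<integral>\<omega>. rk j \<omega> \<partial>Pi) = (\<integral>\<omega>. rk M \<omega> \<partial>Pi)" if j: "j \<in> I" for j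
  proof -
    define \<sigma> where "\<sigma> k = (if k = j then M else if k = M then j else k)" for k
    have inv: "\<sigma> (\<sigma> k) = k" for k unfolding \<sigma>_def by auto
    have MI: "M \<in> I" unfolding I_def by auto
    have \<sigma>I: "\<sigma> \<in> I \<rightarrow> I" using j MI unfolding \<sigma>_def by auto
    have inj\<sigma>: "inj_on \<sigma> I" by (metis inv inj_on_inverseI)
    define T where "T \<omega> = (\<lambda>n\<in>I. \<omega> (\<sigma> n))" for \<omega> :: "nat \<Rightarrow> 'p"
    have T_meas: "T \<in> Pi \<rightarrow>\<^sub>M Pi"
      unfolding T_def Pi_def
      by (intro measurable_restrict measurable_component_singleton) (use \<sigma>I in auto)
    have dist: "distr Pi Pi T = Pi"
      unfolding T_def Pi_def using distr_PiM_reindex[of I "\<lambda>_. P" \<sigma> I] P inj\<sigma> \<sigma>I by simp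
    have "(\<integral>\<omega>. rk M \<omega> \<partial>Pi) = (\<integral>\<omega>. rk M \<omega> \<partial>distr Pi Pi T)" using dist by simp
    also have "\<dots> = (\<integral>\<omega>. rk M (T \<omega>) \<partial>Pi)"
      by (rule integral_distr[OF T_meas rk_meas[OF MI]])
    also have "\<dots> = (\<integral>\<omega>. rk j \<omega> \<partial>Pi)"
    proof (rule Bochner_Integration.integral_cong[OF refl])
      fix \<omega>
      have img: "\<sigma> ` (I - {M}) = I - {j}"
      proof -
        have "\<sigma> ` (I - {M}) = {x. \<sigma> x \<in> I - {M}}"
        proof (rule set_eqI, rule iffI)
          fix x assume "x \<in> \<sigma> ` (I - {M})" then show "x \<in> {x. \<sigma> x \<in> I - {M}}" using inv by auto
        next
          fix x assume "x \<in> {x. \<sigma> x \<in> I - {M}}"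
          then have "\<sigma> (\<sigma> x) \<in> \<sigma> ` (I - {M})" by blast
          then show "x \<in> \<sigma> ` (I - {M})" using inv by simp
        qed
        also have "\<dots> = I - {j}" using j MI unfolding \<sigma>_def I_def by auto
        finally show ?thesis .
      qed
      have TM: "T \<omega> M = \<omega> j" using MI unfolding T_def \<sigma>_def by simp
      have Tk: "k \<in> I - {M} \<Longrightarrow> T \<omega> k = \<omega> (\<sigma> k)" for k unfolding T_def by simp
      have c1: "card {k\<in>I-{M}. g (T \<omega> k) < g (T \<omega> M)} = card {k\<in>I-{j}. g (\<omega> k) < g (\<omega> j)}"
      proof -
        have "{k\<in>I-{M}. g (T \<omega> k) < g (T \<omega> M)} = {k\<in>I-{M}. g (\<omega> (\<sigma> k)) < g (\<omega> j)}"
          using Tk TM by auto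
        also have "card \<dots> = card {k\<in>I-{j}. g (\<omega> k) < g (\<omega> j)}"
          by (rule card_perm[OF inv img]) (simp add: I_def)
        finally show ?thesis by simp
      qed
      have c2: "card {k\<in>I-{M}. g (T \<omega> k) = g (T \<omega> M)} = card {k\<in>I-{j}. g (\<omega> k) = g (\<omega> j)}"
      proof -
        have "{k\<in>I-{M}. g (T \<omega> k) = g (T \<omega> M)} = {k\<in>I-{M}. g (\<omega> (\<sigma> k)) = g (\<omega> j)}"
          using Tk TM by auto
        also have "card \<dots> = card {k\<in>I-{j}. g (\<omega> k) = g (\<omega> j)}"
          by (rule card_perm[OF inv img]) (simp add: I_def)
        finally show ?thesis by simp
      qed
      show "rk M (T \<omega>) = rk j \<omega>" unfolding rk_def using c1 c2 by simp
    qed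
    finally show ?thesis by simp
  qed
  have sum_rk: "(\<Sum>j\<in>I. rk j \<omega>) = real i + 1" for \<omega>
  proof -
    define x where "x k = g (\<omega> k)" for k
    have rkj: "rk j \<omega> = real (card {k\<in>{0..card {k\<in>{..<Suc M}. x k = x j} - 1}. card {k\<in>{..<Suc M}. x k < x j} + k \<le> i})
            / real (card {k\<in>{..<Suc M}. x k = x j})" if "j \<in> I" for j
    proof -
      have l: "{k\<in>I-{j}. g (\<omega> k) < g (\<omega> j)} = {k\<in>{..<Suc M}. x k < x j}"
        unfolding x_def I_def by auto
      have "{k\<in>{..<Suc M}. x k = x j} = insert j {k\<in>I-{j}. g (\<omega> k) = g (\<omega> j)}"
        using that unfolding x_def I_def by auto
      then have e: "card {k\<in>{..<Suc M}. x k = x j} = Suc (card {k\<in>I-{j}. g (\<omega> k) = g (\<omega> j)})"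
        by (simp add: I_def)
      show ?thesis unfolding rk_def rp_card l e by simp
    qed
    have "(\<Sum>j\<in>I. rk j \<omega>) = (\<Sum>j<Suc M. real (card {k\<in>{0..card {k\<in>{..<Suc M}. x k = x j} - 1}. card {k\<in>{..<Suc M}. x k < x j} + k \<le> i})
            / real (card {k\<in>{..<Suc M}. x k = x j}))"
      unfolding I_def using rkj by (intro sum.cong) (auto simp: I_def)
    also have "\<dots> = real i + 1" by (rule rank_sum) (use iM in simp)
    finally show ?thesis .
  qed
  have "(\<Sum>j\<in>I. (\<integral>\<omega>. rk j \<omega> \<partial>Pi)) = (\<integral>\<omega>. (\<Sum>j\<in>I. rk j \<omega>) \<partial>Pi)"
    by (rule Bochner_Integration.integral_sum[symmetric]) (rule rk_int)
  also have "\<dots> = real i + 1" by (simp add: sum_rk Pi.prob_space)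
  finally have "(\<Sum>j\<in>I. (\<integral>\<omega>. rk j \<omega> \<partial>Pi)) = real i + 1" .
  moreover have "(\<Sum>j\<in>I. (\<integral>\<omega>. rk j \<omega> \<partial>Pi)) = real (Suc M) * (\<integral>\<omega>. rk M \<omega> \<partial>Pi)"
  proof -
    have "(\<Sum>j\<in>I. (\<integral>\<omega>. rk j \<omega> \<partial>Pi)) = (\<Sum>j\<in>I. (\<integral>\<omega>. rk M \<omega> \<partial>Pi))"
      by (rule sum.cong[OF refl exch])
    then show ?thesis by (simp add: I_def)
  qed
  ultimately have "(\<integral>\<omega>. rk M \<omega> \<partial>Pi) = real (Suc i) / real (Suc M)"
    by (simp add: field_simps)
  with step1 show ?thesis unfolding \<Phi>_def PM_def by simp
qed



lemma sec_meas:
  assumes "(\<lambda>(a, b). h a b) \<in> borel_measurable (A \<Otimes>\<^sub>M B)" "b \<in> space B"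
  shows "(\<lambda>a. h a b) \<in> borel_measurable A"
proof -
  have "(\<lambda>a. (a, b)) \<in> A \<rightarrow>\<^sub>M A \<Otimes>\<^sub>M B"
    using assms(2) by (intro measurable_Pair measurable_ident_sets measurable_const) auto
  from measurable_compose[OF this assms(1)] show ?thesis by simp
qed

lemma Phi_meas:
  fixes g :: "'p \<Rightarrow> real" and M :: nat
  assumes g: "g \<in> borel_measurable P"
  shows "(\<lambda>(t, \<omega>). rp i (card {m\<in>{..<M}. g (\<omega> m) < g t}) (card {m\<in>{..<M}. g (\<omega> m) = g t}))
           \<in> borel_measurable (P \<Otimes>\<^sub>M PiM {..<M} (\<lambda>_. P))"
  unfolding split_beta'
proof (intro rp_meas card_meas)
  fix k assume k: "k \<in> {..<M}"
  have gk: "(\<lambda>w. g (w k)) \<in> borel_measurable (PiM {..<M} (\<lambda>_. P))" using k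
    by (auto intro!: measurable_compose[OF measurable_component_singleton[of _ "{..<M}" "\<lambda>_. P"] g])
  have [measurable]: "(\<lambda>z. g (snd z k)) \<in> borel_measurable (P \<Otimes>\<^sub>M PiM {..<M} (\<lambda>_. P))"
    by (rule measurable_compose[OF measurable_snd gk])
  have [measurable]: "(\<lambda>z. g (fst z)) \<in> borel_measurable (P \<Otimes>\<^sub>M PiM {..<M} (\<lambda>_. P))"
    by (rule measurable_compose[OF measurable_fst g])
  show "{z \<in> space (P \<Otimes>\<^sub>M PiM {..<M} (\<lambda>_. P)). g (snd z k) < g (fst z)} \<in> sets (P \<Otimes>\<^sub>M PiM {..<M} (\<lambda>_. P))"
      "{z \<in> space (P \<Otimes>\<^sub>M PiM {..<M} (\<lambda>_. P)). g (snd z k) = g (fst z)} \<in> sets (P \<Otimes>\<^sub>M PiM {..<M} (\<lambda>_. P))"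
    by measurable
qed auto

lemma density_prob:
  fixes d :: "'p \<Rightarrow> real"
  assumes dm: "d \<in> borel_measurable MT" and dnn: "\<forall>\<theta>\<in>space MT. 0 \<le> d \<theta>"
    and dint: "integrable MT d" and d1: "(\<integral>\<theta>. d \<theta> \<partial>MT) = 1"
  shows "prob_space (density MT (\<lambda>\<theta>. ennreal (d \<theta>)))"
proof (rule prob_spaceI)
  have "emeasure (density MT (\<lambda>\<theta>. ennreal (d \<theta>))) (space (density MT (\<lambda>\<theta>. ennreal (d \<theta>))))
      = (\<integral>\<^sup>+\<theta>. ennreal (d \<theta>) * indicator (space MT) \<theta> \<partial>MT)"
    using dm by (subst emeasure_density) auto
  also have "\<dots> = (\<integral>\<^sup>+\<theta>. ennreal (d \<theta>) \<partial>MT)"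
    by (rule nn_integral_cong) (simp add: indicator_def)
  also have "\<dots> = ennreal (\<integral>\<theta>. d \<theta> \<partial>MT)"
    using dint dnn by (intro nn_integral_eq_integral) auto
  finally show "emeasure (density MT (\<lambda>\<theta>. ennreal (d \<theta>))) (space (density MT (\<lambda>\<theta>. ennreal (d \<theta>)))) = 1"
    using d1 by simp
qed

lemma core_cont:
  fixes \<phi> :: "'p \<Rightarrow> 'y \<Rightarrow> real" and f :: "'p \<Rightarrow> 'y \<Rightarrow> real"
  assumes dm: "(\<lambda>\<theta>. \<phi> \<theta> y) \<in> borel_measurable MT" and dnn: "\<forall>\<theta>\<in>space MT. 0 \<le> \<phi> \<theta> y"
    and dint: "integrable MT (\<lambda>\<theta>. \<phi> \<theta> y)" and d1: "(\<integral>\<theta>. \<phi> \<theta> y \<partial>MT) = 1"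
    and gm: "(\<lambda>\<theta>. f \<theta> y) \<in> borel_measurable MT" and x0: "0 \<le> x" and x1: "x \<le> 1"
  shows "(\<integral>\<theta>t. \<phi> \<theta>t y * cont_r MT \<phi> f x \<theta>t y \<partial>MT) = x"
proof -
  define g where "g \<theta> = f \<theta> y" for \<theta>
  define P where "P = density MT (\<lambda>\<theta>. ennreal (\<phi> \<theta> y))"
  interpret P: prob_space P unfolding P_def by (rule density_prob) (use assms in auto)
  have sP: "sets P = sets MT" unfolding P_def by simp
  have spP: "space P = space MT" unfolding P_def by simp
  have gmP: "g \<in> borel_measurable P" using gm unfolding g_def by (simp add: measurable_cong_sets[OF sP refl])
  have gm': "g \<in> borel_measurable MT" using gm unfolding g_def by simp
  define \<mu> where "\<mu> = distr P borel g"
  interpret \<mu>: real_distribution \<mu> unfolding \<mu>_def using gmP by simp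
  have Pint: "(\<integral>\<theta>. \<phi> \<theta> y * h \<theta> \<partial>MT) = (\<integral>\<theta>. h \<theta> \<partial>P)" if hm: "h \<in> borel_measurable MT" for h
    unfolding P_def using hm dm dnn by (subst integral_density) auto
  have ind: "(\<integral>\<theta>. indicator {\<theta>. g \<theta> \<in> S} \<theta> * \<phi> \<theta> y \<partial>MT) = measure \<mu> S" if S: "S \<in> sets borel" for S
  proof -
    have m1: "(\<lambda>\<theta>. indicator {\<theta>. g \<theta> \<in> S} \<theta> :: real) \<in> borel_measurable MT"
    proof -
      have "(\<lambda>\<theta>. indicator {\<theta>. g \<theta> \<in> S} \<theta> :: real) = (\<lambda>\<theta>. indicator S (g \<theta>))"
        by (auto simp: indicator_def)
      then show ?thesis using gm' S by simp
    qed
    have "(\<integral>\<theta>. indicator {\<theta>. g \<theta> \<in> S} \<theta> * \<phi> \<theta> y \<partial>MT) = (\<integral>\<theta>. \<phi> \<theta> y * indicator {\<theta>. g \<theta> \<in> S} \<theta> \<partial>MT)"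
      by (simp add: mult.commute)
    also have "\<dots> = (\<integral>\<theta>. indicator {\<theta>. g \<theta> \<in> S} \<theta> \<partial>P)" by (rule Pint[OF m1])
    also have "\<dots> = measure P ({\<theta>. g \<theta> \<in> S} \<inter> space P)" by simp
    also have "{\<theta>. g \<theta> \<in> S} \<inter> space P = g -` S \<inter> space P" by auto
    also have "measure P (g -` S \<inter> space P) = measure \<mu> S" unfolding \<mu>_def using gmP S by (simp add: measure_distr)
    finally show ?thesis .
  qed
  have C: "cont_C MT \<phi> f s y = cdf \<mu> s" for s
  proof -
    have "cont_C MT \<phi> f s y = (\<integral>\<theta>. indicator {\<theta>. g \<theta> \<in> {..s}} \<theta> * \<phi> \<theta> y \<partial>MT)"
      unfolding cont_C_def g_def by simp
    also have "\<dots> = cdf \<mu> s" using ind[of "{..s}"] by (simp add: cdf_def)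
    finally show ?thesis .
  qed
  have D: "cont_D MT \<phi> f s y = measure \<mu> {s}" for s
  proof -
    have "cont_D MT \<phi> f s y = (\<integral>\<theta>. indicator {\<theta>. g \<theta> \<in> {s}} \<theta> * \<phi> \<theta> y \<partial>MT)"
      unfolding cont_D_def g_def by simp
    also have "\<dots> = measure \<mu> {s}" using ind[of "{s}"] by simp
    finally show ?thesis .
  qed
  define H where "H s = hfun (cdf \<mu> s) (measure \<mu> {s}) x" for s
  have Hm: "H \<in> borel_measurable borel" unfolding H_def by measurable
  have r: "cont_r MT \<phi> f x \<theta>t y = H (g \<theta>t)" for \<theta>t
    unfolding cont_r_def C D H_def g_def by (rule unif_hfun) simp
  have "(\<integral>\<theta>t. \<phi> \<theta>t y * cont_r MT \<phi> f x \<theta>t y \<partial>MT) = (\<integral>\<theta>t. \<phi> \<theta>t y * H (g \<theta>t) \<partial>MT)"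
    by (simp add: r)
  also have "\<dots> = (\<integral>\<theta>t. H (g \<theta>t) \<partial>P)"
    by (rule Pint) (rule measurable_compose[OF gm' Hm])
  also have "\<dots> = (\<integral>s. H s \<partial>\<mu>)"
    unfolding \<mu>_def by (rule integral_distr[symmetric]) (use gmP Hm in auto)
  also have "\<dots> = x" unfolding H_def by (rule \<mu>.pit[OF x0 x1])
  finally show ?thesis .
qed

lemma core_M:
  fixes \<phi> :: "'p \<Rightarrow> 'y \<Rightarrow> real" and f :: "'p \<Rightarrow> 'y \<Rightarrow> real"
  assumes dm: "(\<lambda>\<theta>. \<phi> \<theta> y) \<in> borel_measurable MT" and dnn: "\<forall>\<theta>\<in>space MT. 0 \<le> \<phi> \<theta> y"
    and dint: "integrable MT (\<lambda>\<theta>. \<phi> \<theta> y)" and d1: "(\<integral>\<theta>. \<phi> \<theta> y \<partial>MT) = 1"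
    and gm: "(\<lambda>\<theta>. f \<theta> y) \<in> borel_measurable MT" and iM: "i < M"
  shows "(\<integral>\<theta>t. \<phi> \<theta>t y * sbc_R MT \<phi> f M i \<theta>t y \<partial>MT) = real (Suc i) / real (Suc M)"
proof -
  define g where "g \<theta> = f \<theta> y" for \<theta>
  define P where "P = density MT (\<lambda>\<theta>. ennreal (\<phi> \<theta> y))"
  interpret P: prob_space P unfolding P_def by (rule density_prob) (use assms in auto)
  have sP: "sets P = sets MT" unfolding P_def by simp
  have gmP: "g \<in> borel_measurable P" using gm unfolding g_def by (simp add: measurable_cong_sets[OF sP refl])
  define PM where "PM = PiM {..<M} (\<lambda>_. P)"
  interpret PM: prob_space PM unfolding PM_def by (rule prob_space_PiM) (rule P.prob_space_axioms)
  define R where "R t = (\<integral>\<omega>. rp i (card {m\<in>{..<M}. g (\<omega> m) < g t}) (card {m\<in>{..<M}. g (\<omega> m) = g t}) \<partial>PM)" for t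
  have Rs: "sbc_R MT \<phi> f M i \<theta>t y = R \<theta>t" for \<theta>t
    unfolding sbc_R_def R_def sample_measure_def PM_def P_def N_less_def N_equals_def rp_def g_def ..
  have RmP: "R \<in> borel_measurable P"
    unfolding R_def PM_def
    by (rule PM.borel_measurable_lebesgue_integral[unfolded PM_def]) (rule Phi_meas[OF gmP])
  have Rm: "R \<in> borel_measurable MT" using RmP by (simp add: measurable_cong_sets[OF sP refl])
  have "(\<integral>\<theta>t. \<phi> \<theta>t y * sbc_R MT \<phi> f M i \<theta>t y \<partial>MT) = (\<integral>\<theta>t. \<phi> \<theta>t y * R \<theta>t \<partial>MT)"
    by (simp add: Rs)
  also have "\<dots> = (\<integral>\<theta>t. R \<theta>t \<partial>P)"
    unfolding P_def using Rm dm dnn by (subst integral_density) auto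
  also have "\<dots> = real (Suc i) / real (Suc M)"
    unfolding R_def PM_def by (rule sbc_exch[OF P.prob_space_axioms gmP iM])
  finally show ?thesis .
qed



lemma sec_meas2:
  assumes "(\<lambda>(a, b). h a b) \<in> borel_measurable (A \<Otimes>\<^sub>M B)" "a \<in> space A"
  shows "(\<lambda>b. h a b) \<in> borel_measurable B"
proof -
  have "(\<lambda>b. (a, b)) \<in> B \<rightarrow>\<^sub>M A \<Otimes>\<^sub>M B"
    using assms(2) by (intro measurable_Pair measurable_ident_sets measurable_const) auto
  from measurable_compose[OF this assms(1)] show ?thesis by simp
qed

lemma int_of_nonzero: "(\<integral>x. h x \<partial>N) \<noteq> (0::real) \<Longrightarrow> integrable N h"
  using not_integrable_integral_eq by blast

theorem mainTheorem5:
  fixes MT :: "'p measure" and MY :: "'y measure"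
    and prior :: "'p \<Rightarrow> real" and obs :: "'y \<Rightarrow> 'p \<Rightarrow> real"
    and f :: "'p \<Rightarrow> 'y \<Rightarrow> real" and M :: nat
  assumes "sigma_finite_measure MT" and "sigma_finite_measure MY"
    and "prior \<in> borel_measurable MT"
    and "\<forall>\<theta>\<in>space MT. 0 \<le> prior \<theta>"
    and "(\<integral>\<theta>. prior \<theta> \<partial>MT) = 1"
    and "(\<lambda>(\<theta>, y). obs y \<theta>) \<in> borel_measurable (MT \<Otimes>\<^sub>M MY)"
    and "\<forall>\<theta>\<in>space MT. \<forall>y\<in>space MY. 0 \<le> obs y \<theta>"
    and "\<forall>\<theta>\<in>space MT. (\<integral>y. obs y \<theta> \<partial>MY) = 1"
    and "(\<lambda>(\<theta>, y). f \<theta> y) \<in> borel_measurable (MT \<Otimes>\<^sub>M MY)"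
  shows "passes_cont_SBC MT MY prior obs (post MT prior obs) f
       \<and> passes_M_SBC MT MY prior obs (post MT prior obs) f M"
proof -
  note sfT = assms(1) and sfY = assms(2) and prm[measurable] = assms(3) and prnn = assms(4)
    and pr1 = assms(5) and obm = assms(6) and obnn = assms(7) and ob1 = assms(8) and fm = assms(9)
  interpret MT: sigma_finite_measure MT by (rule sfT)
  interpret MY: sigma_finite_measure MY by (rule sfY)
  interpret YT: pair_sigma_finite MY MT ..
  define m where "m y = marg MT prior obs y" for y
  have obs_y: "(\<lambda>\<theta>. obs y \<theta>) \<in> borel_measurable MT" if "y \<in> space MY" for y
    using sec_meas[OF obm that] .
  have f_y: "(\<lambda>\<theta>. f \<theta> y) \<in> borel_measurable MT" if "y \<in> space MY" for y
    using sec_meas[OF fm that] .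
  have obs_t: "(\<lambda>y. obs y \<theta>) \<in> borel_measurable MY" if "\<theta> \<in> space MT" for \<theta>
    using sec_meas2[OF obm that] .
  have m_nn: "0 \<le> m y" if "y \<in> space MY" for y
    unfolding m_def marg_def using obnn prnn that
    by (intro Bochner_Integration.integral_nonneg) auto
  have post_facts: "(\<lambda>\<theta>. post MT prior obs \<theta> y) \<in> borel_measurable MT
      \<and> (\<forall>\<theta>\<in>space MT. 0 \<le> post MT prior obs \<theta> y)
      \<and> integrable MT (\<lambda>\<theta>. post MT prior obs \<theta> y)
      \<and> (\<integral>\<theta>. post MT prior obs \<theta> y \<partial>MT) = 1"
    if y: "y \<in> space MY" and m0: "m y \<noteq> 0" for y
  proof -
    have mpos: "m y > 0" using m_nn[OF y] m0 by simp
    have int: "integrable MT (\<lambda>\<theta>. obs y \<theta> * prior \<theta>)"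
      using m0 unfolding m_def marg_def by (rule int_of_nonzero)
    have pe: "post MT prior obs \<theta> y = obs y \<theta> * prior \<theta> / m y" for \<theta>
      unfolding post_def m_def ..
    show ?thesis
    proof (intro conjI)
      show "(\<lambda>\<theta>. post MT prior obs \<theta> y) \<in> borel_measurable MT"
        unfolding pe using obs_y[OF y] prm by measurable
      show "\<forall>\<theta>\<in>space MT. 0 \<le> post MT prior obs \<theta> y"
        unfolding pe using obnn prnn y mpos by auto
      show "integrable MT (\<lambda>\<theta>. post MT prior obs \<theta> y)"
        unfolding pe using int by simp
      show "(\<integral>\<theta>. post MT prior obs \<theta> y \<partial>MT) = 1"
        unfolding pe using mpos by (simp add: m_def marg_def)
    qed
  qed
  have cont_y: "cont_q MT prior obs (post MT prior obs) f x y * m y = x * m y"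
    if y: "y \<in> space MY" and x: "0 \<le> x" "x \<le> 1" for x y
  proof (cases "m y = 0")
    case True then show ?thesis by simp
  next
    case False
    have "cont_q MT prior obs (post MT prior obs) f x y = x"
      unfolding cont_q_def
      by (rule core_cont[where \<phi>="post MT prior obs" and f=f and y=y and MT=MT and x=x])
        (use post_facts[OF y False] f_y[OF y] x in auto)
    then show ?thesis by simp
  qed
  have M_y: "sbc_Q MT prior obs (post MT prior obs) f M i y * m y = real (Suc i) / real (Suc M) * m y"
    if y: "y \<in> space MY" and i: "i < M" for i y
  proof (cases "m y = 0")
    case True then show ?thesis by simp
  next
    case False
    have "sbc_Q MT prior obs (post MT prior obs) f M i y = real (Suc i) / real (Suc M)"
      unfolding sbc_Q_def
      by (rule core_M[where \<phi>="post MT prior obs" and f=f and y=y and MT=MT and M=M and i=i])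
        (use post_facts[OF y False] f_y[OF y] i in auto)
    then show ?thesis by simp
  qed
  have om2[measurable]: "(\<lambda>z. obs (fst z) (snd z)) \<in> borel_measurable (MY \<Otimes>\<^sub>M MT)"
    using measurable_compose[OF measurable_pair_swap' obm] by (simp add: split_beta')
  have pm2[measurable]: "(\<lambda>z. prior (snd z)) \<in> borel_measurable (MY \<Otimes>\<^sub>M MT)"
    by (rule measurable_compose[OF measurable_snd prm])
  define F where "F y = (\<integral>\<^sup>+\<theta>. ennreal (obs y \<theta> * prior \<theta>) \<partial>MT)" for y
  have Fm: "F \<in> borel_measurable MY" unfolding F_def
    by (rule MT.borel_measurable_nn_integral) (simp add: split_beta')
  have "(\<integral>\<^sup>+y. F y \<partial>MY) = (\<integral>\<^sup>+\<theta>. (\<integral>\<^sup>+y. ennreal (obs y \<theta> * prior \<theta>) \<partial>MY) \<partial>MT)"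
    unfolding F_def by (rule YT.Fubini'[symmetric]) (simp add: split_beta')
  also have "\<dots> = (\<integral>\<^sup>+\<theta>. ennreal (prior \<theta>) \<partial>MT)"
  proof (rule nn_integral_cong)
    fix \<theta> assume t: "\<theta> \<in> space MT"
    have oint: "integrable MY (\<lambda>y. obs y \<theta>)" using ob1 t by (intro int_of_nonzero) simp
    have "(\<integral>\<^sup>+y. ennreal (obs y \<theta> * prior \<theta>) \<partial>MY) = (\<integral>\<^sup>+y. ennreal (prior \<theta>) * ennreal (obs y \<theta>) \<partial>MY)"
      using prnn t by (intro nn_integral_cong) (simp add: ennreal_mult' mult.commute)
    also have "\<dots> = ennreal (prior \<theta>) * (\<integral>\<^sup>+y. ennreal (obs y \<theta>) \<partial>MY)"
      using obs_t[OF t] by (simp add: nn_integral_cmult)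
    also have "(\<integral>\<^sup>+y. ennreal (obs y \<theta>) \<partial>MY) = ennreal (\<integral>y. obs y \<theta> \<partial>MY)"
      using oint obnn t by (intro nn_integral_eq_integral) auto
    also have "\<dots> = 1" using ob1 t by simp
    finally show "(\<integral>\<^sup>+y. ennreal (obs y \<theta> * prior \<theta>) \<partial>MY) = ennreal (prior \<theta>)" by simp
  qed
  also have "\<dots> = ennreal (\<integral>\<theta>. prior \<theta> \<partial>MT)"
    using prnn pr1 by (intro nn_integral_eq_integral int_of_nonzero) auto
  also have "\<dots> = 1" using pr1 by simp
  finally have F1: "(\<integral>\<^sup>+y. F y \<partial>MY) = 1" .
  have Ffin: "AE y in MY. F y \<noteq> \<infinity>" using Fm F1 by (intro nn_integral_PInf_AE) auto
  have mF: "m y = enn2real (F y)" if y: "y \<in> space MY" for y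
    unfolding m_def marg_def F_def using obs_y[OF y] prm obnn prnn y
    by (intro integral_eq_nn_integral) auto
  have mm: "m \<in> borel_measurable MY"
    unfolding m_def marg_def by (rule MT.borel_measurable_lebesgue_integral) (simp add: split_beta')
  have "(\<integral>\<^sup>+y. ennreal (m y) \<partial>MY) = (\<integral>\<^sup>+y. F y \<partial>MY)"
    using Ffin by (intro nn_integral_cong_AE) (auto simp: mF ennreal_enn2real_if AE_space)
  then have "(\<integral>\<^sup>+y. ennreal (m y) \<partial>MY) = 1" using F1 by simp
  then have m1: "(\<integral>y. m y \<partial>MY) = 1"
    using mm m_nn by (subst integral_eq_nn_integral) auto
  show ?thesis
    unfolding passes_cont_SBC_def passes_M_SBC_def
  proof (intro conjI ballI allI impI)
    fix x :: real assume x: "x \<in> {0..1}"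
    have "(\<integral>y. cont_q MT prior obs (post MT prior obs) f x y * marg MT prior obs y \<partial>MY) = (\<integral>y. x * m y \<partial>MY)"
      using x cont_y unfolding m_def by (intro Bochner_Integration.integral_cong) auto
    also have "\<dots> = x" using m1 by simp
    finally show "(\<integral>y. cont_q MT prior obs (post MT prior obs) f x y * marg MT prior obs y \<partial>MY) = x" .
  next
    fix i assume i: "i < M"
    have "(\<integral>y. sbc_Q MT prior obs (post MT prior obs) f M i y * marg MT prior obs y \<partial>MY)
        = (\<integral>y. real (Suc i) / real (Suc M) * m y \<partial>MY)"
      using i M_y unfolding m_def by (intro Bochner_Integration.integral_cong) auto
    also have "\<dots> = real (i + 1) / real (M + 1)" using m1 by simp
    finally show "(\<integral>y. sbc_Q MT prior obs (post MT prior obs) f M i y * marg MT prior obs y \<partial>MY)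
        = real (i + 1) / real (M + 1)" .
  qed
qed


end
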